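(* For $a\in\mathbb{C}_+$ and $f\in\mathcal{B}$ let $(T_{\mathcal{B}}(a)f)(z)=f(z+a)$, $z\in\mathbb{C}_+$. Then $(T_{\mathcal{B}}(a))_{a\in\mathbb{C}_+}$ is a holomorphic $C_0$-semigroup of contractions on $\mathcal{B}$.
   Context: $\mathbb{C}_+=\{z:\Re z>0\}$. $\mathcal{B}$ is the space of holomorphic $f:\mathbb{C}_+\to\mathbb{C}$ with $\|f\|_{\mathcal{B}_0}:=\int_0^\infty\sup_{y\in\mathbb{R}}|f'(x+iy)|\,dx<\infty$, normed by $\|f\|_{\mathcal{B}}=\sup_{z\in\mathbb{C}_+}|f(z)|+\|f\|_{\mathcal{B}_0}$ (a Banach algebra). *)

theory Defs
  imports "HOL-Analysis.Analysis"
begin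

definition C_plus :: "complex set" where
  "C_plus = {z. Re z > 0}"

definition B0_norm :: "(complex \<Rightarrow> complex) \<Rightarrow> ennreal" where
  "B0_norm f = (\<integral>\<^sup>+ x \<in> {0<..}. (SUP y. ennreal (cmod (deriv f (Complex x y)))) \<partial>lborel)"

text \<open>The space B: holomorphic functions on C_plus with finite B0-seminorm.
  Functions are total in HOL; only their values on C_plus matter.\<close>
definition B_space :: "(complex \<Rightarrow> complex) set" where
  "B_space = {f. f holomorphic_on C_plus \<and> B0_norm f < \<infinity>}"

definition B_norm :: "(complex \<Rightarrow> complex) \<Rightarrow> ennreal" where
  "B_norm f = (SUP z \<in> C_plus. ennreal (cmod (f z))) + B0_norm f"

definition B_opnorm :: "((complex \<Rightarrow> complex) \<Rightarrow> (complex \<Rightarrow> complex)) \<Rightarrow> ennreal" where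
  "B_opnorm A = (SUP f \<in> {f \<in> B_space. B_norm f \<le> 1}. B_norm (A f))"

definition sector :: "real \<Rightarrow> complex set" where
  "sector \<psi> = {z. z \<noteq> 0 \<and> \<bar>Arg z\<bar> < \<psi>}"

definition T_B :: "complex \<Rightarrow> (complex \<Rightarrow> complex) \<Rightarrow> (complex \<Rightarrow> complex)" where
  "T_B a f = (\<lambda>z. f (z + a))"

text \<open>A family (T a), a in C_plus, of operators on B is a holomorphic C0-semigroup of
  contractions (on the sector C_plus of angle pi/2) if:
  each T a is a linear map B -> B; T(a+b) = T(a)T(b); ||T a|| <= 1;
  a |-> T a is holomorphic in operator norm on C_plus; and T a f -> f as a -> 0
  within every proper subsector (standard definition, e.g. Arendt-Batty-Hieber-Neubrander 3.7.1).
  Elements of B are identified when they agree on C_plus.\<close>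
definition hol_C0_contraction_semigroup_B ::
  "(complex \<Rightarrow> (complex \<Rightarrow> complex) \<Rightarrow> (complex \<Rightarrow> complex)) \<Rightarrow> bool" where
  "hol_C0_contraction_semigroup_B T \<longleftrightarrow>
     (\<forall>a \<in> C_plus. \<forall>f \<in> B_space. T a f \<in> B_space) \<and>
     (\<forall>a \<in> C_plus. \<forall>f \<in> B_space. \<forall>g \<in> B_space. \<forall>c. \<forall>z \<in> C_plus.
        T a (\<lambda>w. c * f w + g w) z = c * T a f z + T a g z) \<and>
     (\<forall>a \<in> C_plus. \<forall>f \<in> B_space. \<forall>g \<in> B_space. (\<forall>z \<in> C_plus. f z = g z) \<longrightarrow>
        (\<forall>z \<in> C_plus. T a f z = T a g z)) \<and>
     (\<forall>a \<in> C_plus. \<forall>b \<in> C_plus. \<forall>f \<in> B_space. \<forall>z \<in> C_plus.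
        T (a + b) f z = T a (T b f) z) \<and>
     (\<forall>a \<in> C_plus. \<forall>f \<in> B_space. B_norm (T a f) \<le> B_norm f) \<and>
     (\<forall>a0 \<in> C_plus. \<exists>D. (\<forall>f \<in> B_space. D f \<in> B_space) \<and>
        ((\<lambda>a. B_opnorm (\<lambda>f z. (T a f z - T a0 f z) / (a - a0) - D f z)) \<longlongrightarrow> 0)
          (at a0 within C_plus)) \<and>
     (\<forall>\<psi>. 0 < \<psi> \<and> \<psi> < pi / 2 \<longrightarrow> (\<forall>f \<in> B_space.
        ((\<lambda>a. B_norm (\<lambda>z. T a f z - f z)) \<longlongrightarrow> 0) (at 0 within sector \<psi>)))"

end

theory Submission
  imports Defs "HOL-Complex_Analysis.Complex_Analysis"
begin

definition G :: "(complex \<Rightarrow> complex) \<Rightarrow> real \<Rightarrow> ennreal" where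
  "G f x = (SUP y. ennreal (cmod (deriv f (Complex x y))))"

lemma B0_norm_G: "B0_norm f = (\<integral>\<^sup>+ x \<in> {0<..}. G f x \<partial>lborel)"
  by (simp add: B0_norm_def G_def)

lemma open_C_plus: "open C_plus"
  unfolding C_plus_def by (simp add: open_halfspace_Re_gt)

lemma C_plus_iff[simp]: "z \<in> C_plus \<longleftrightarrow> Re z > 0"
  by (simp add: C_plus_def)

lemma hol_deriv_at:
  assumes "f holomorphic_on C_plus" "Re z > 0"
  shows "(f has_field_derivative deriv f z) (at z)"
  using assms open_C_plus by (meson C_plus_iff holomorphic_derivI)

lemma deriv_hol:
  assumes "f holomorphic_on C_plus"
  shows "deriv f holomorphic_on C_plus"
  using assms open_C_plus holomorphic_deriv by blast

lemma deriv_shift: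
  assumes "f holomorphic_on C_plus" "Re (w + a) > 0"
  shows "deriv (\<lambda>z. f (z + a)) w = deriv f (w + a)"
proof -
  have "((\<lambda>z. f (z + a)) has_field_derivative deriv f (w + a)) (at w)"
  proof -
    have d: "((\<lambda>z. z + a) has_field_derivative 1) (at w)"
      by (auto intro!: derivative_eq_intros)
    show ?thesis
      using DERIV_chain2[of f "deriv f (w + a)" "\<lambda>z. z + a" w 1 UNIV, OF _ d] hol_deriv_at[OF assms]
      by simp
  qed
  then show ?thesis by (rule DERIV_imp_deriv)
qed

lemma G_bound:
  "Re z = x \<Longrightarrow> ennreal (cmod (deriv f z)) \<le> G f x"
  unfolding G_def by (rule SUP_upper2[of "Im z"]) (auto intro: complex_eqI)

lemma Complex_vd: "((\<lambda>t. Complex t y) has_vector_derivative 1) (at t within S)"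
proof -
  have e: "(\<lambda>t. Complex t y) = (\<lambda>t. of_real t + Complex 0 y)"
    by (auto simp: complex_eq_iff)
  show ?thesis unfolding e
    by (auto intro!: derivative_eq_intros)
qed

lemma cont_Complex: "continuous_on S (\<lambda>t. Complex t y)"
proof -
  have e: "(\<lambda>t. Complex t y) = (\<lambda>t. of_real t + Complex 0 y)"
    by (auto simp: complex_eq_iff)
  show ?thesis unfolding e by (intro continuous_intros)
qed

lemma HSEG:
  assumes hol: "f holomorphic_on C_plus" and "0 < x1" "x1 \<le> x2"
  shows "ennreal (cmod (f (Complex x2 y) - f (Complex x1 y))) \<le> (\<integral>\<^sup>+ t\<in>{x1..x2}. G f t \<partial>lborel)"
proof -
  define g where "g t = cmod (deriv f (Complex t y))" for t
  have vd: "((\<lambda>t. f (Complex t y)) has_vector_derivative deriv f (Complex t y)) (at t within {x1..x2})"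
    if "t \<in> {x1..x2}" for t
  proof -
    have "Re (Complex t y) > 0" using that \<open>0 < x1\<close> by auto
    from hol_deriv_at[OF hol this] have "(f has_field_derivative deriv f (Complex t y)) (at (Complex t y))" .
    from field_vector_diff_chain_within[OF Complex_vd has_field_derivative_at_within[OF this]]
    show ?thesis by (simp add: o_def)
  qed
  have ftc: "((\<lambda>t. deriv f (Complex t y)) has_integral (f (Complex x2 y) - f (Complex x1 y))) {x1..x2}"
    by (rule fundamental_theorem_of_calculus[OF \<open>x1 \<le> x2\<close> vd])
  have contd: "continuous_on {x1..x2} (\<lambda>t. deriv f (Complex t y))"
  proof -
    have "continuous_on C_plus (deriv f)"
      using deriv_hol[OF hol] holomorphic_on_imp_continuous_on by blast
    moreover have "(\<lambda>t. Complex t y) ` {x1..x2} \<subseteq> C_plus" using \<open>0 < x1\<close> by auto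
    ultimately show ?thesis
      using continuous_on_compose2[OF _ cont_Complex] by blast
  qed
  have gint: "g integrable_on {x1..x2}"
    unfolding g_def by (intro integrable_continuous_interval continuous_intros contd)
  have "cmod (f (Complex x2 y) - f (Complex x1 y)) = cmod (integral {x1..x2} (\<lambda>t. deriv f (Complex t y)))"
    using ftc by (simp add: integral_unique)
  also have "\<dots> \<le> integral {x1..x2} g"
    by (rule integral_norm_bound_integral) (use ftc gint in \<open>auto simp: g_def\<close>)
  finally have 1: "cmod (f (Complex x2 y) - f (Complex x1 y)) \<le> integral {x1..x2} g" .
  have eq: "integral\<^sup>N lborel (\<lambda>x. indicator {x1..x2} x * g x) = integral {x1..x2} g"
    by (rule nn_integral_has_integral_lebesgue) (use gint in \<open>auto simp: g_def[abs_def] dest: integrable_integral\<close>)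
  have le: "integral\<^sup>N lborel (\<lambda>x. indicator {x1..x2} x * g x) \<le> (\<integral>\<^sup>+ t\<in>{x1..x2}. G f t \<partial>lborel)"
    by (intro nn_integral_mono) (auto simp: indicator_def g_def intro: G_bound)
  show ?thesis using 1 eq le by (metis ennreal_leI order_trans)
qed

lemma denom_bound:
  assumes "0 \<le> Re u" "0 < e"
  shows "1 + e^2 * (cmod u)^2 \<le> (cmod (1 + of_real e * u))^2"
proof -
  have "(cmod (1 + of_real e * u))^2 = (1 + e * Re u)^2 + (e * Im u)^2"
    by (simp only: cmod_power2) (simp add: power2_eq_square algebra_simps)
  moreover have "(cmod u)^2 = (Re u)^2 + (Im u)^2" by (simp add: cmod_power2)
  ultimately show ?thesis using assms
    by (simp add: power2_eq_square algebra_simps)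
qed

lemma PL_step:
  assumes hol: "h holomorphic_on C_plus" and c: "0 < c"
    and gr: "\<And>z. c \<le> Re z \<Longrightarrow> cmod (h z) \<le> A + B * cmod z"
    and A: "0 \<le> A" and B: "0 \<le> B"
    and bd: "\<And>y. cmod (h (Complex c y)) \<le> M"
    and z0: "c \<le> Re z0" and e: "0 < e" and eta: "0 < \<eta>"
  shows "cmod (h z0) \<le> (M + \<eta>) * (cmod (1 + of_real e * (z0 - of_real c)))^2"
proof -
  have M: "0 \<le> M" using bd[of 0] norm_ge_zero order_trans by blast
  define k where "k z = h z / (1 + of_real e * (z - of_real c))^2" for z
  define R where "R = max (max (cmod (z0 - of_real c) + 1) 1) ((A + B * c + B) / (e^2 * (M + \<eta>)))"
  have R1: "1 \<le> R" and Rz: "cmod (z0 - of_real c) \<le> R" and R3: "(A + B * c + B) / (e^2 * (M + \<eta>)) \<le> R"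
    unfolding R_def by (auto simp: le_max_iff_disj)
  define S where "S = {z. c \<le> Re z} \<inter> cball (of_real c) R"
  have dnz: "(1 + of_real e * (z - of_real c)) \<noteq> 0" if "c \<le> Re z" for z
  proof -
    have "1 + e^2 * (cmod (z - of_real c))^2 \<le> (cmod (1 + of_real e * (z - of_real c)))^2"
      by (rule denom_bound) (use that e in auto)
    moreover have "0 \<le> e^2 * (cmod (z - of_real c))^2" by simp
    ultimately show ?thesis by (smt (verit) norm_zero power_zero_numeral)
  qed
  have holk: "k holomorphic_on {z. c \<le> Re z}"
    unfolding k_def
    by (intro holomorphic_intros holomorphic_on_subset[OF hol]) (use c dnz in auto)
  have clS: "closed S" unfolding S_def
    by (intro closed_Int closed_halfspace_Re_ge closed_cball)
  have "cmod (k z0) \<le> M + \<eta>"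
  proof (rule maximum_modulus_frontier[of k S])
    show "k holomorphic_on interior S"
      by (rule holomorphic_on_subset[OF holk]) (use interior_subset in \<open>auto simp: S_def\<close>)
    show "continuous_on (closure S) k"
      using holomorphic_on_imp_continuous_on[OF holk] clS
      by (metis closure_closed continuous_on_subset inf_le1 S_def)
    show "bounded S" unfolding S_def by auto
    show "z0 \<in> S" unfolding S_def using z0 Rz by (auto simp: dist_norm norm_minus_commute)
  next
    fix z assume zf: "z \<in> frontier S"
    hence zS: "z \<in> S" using clS frontier_subset_closed by blast
    hence zc: "c \<le> Re z" and zR: "cmod (z - of_real c) \<le> R"
      by (auto simp: S_def dist_norm norm_minus_commute)
    have db: "1 + e^2 * (cmod (z - of_real c))^2 \<le> (cmod (1 + of_real e * (z - of_real c)))^2"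
      by (rule denom_bound) (use zc e in auto)
    have nk: "cmod (k z) = cmod (h z) / (cmod (1 + of_real e * (z - of_real c)))^2"
      by (simp add: k_def norm_divide norm_power)
    have dpos: "1 \<le> (cmod (1 + of_real e * (z - of_real c)))^2"
      using db by (smt (verit) zero_le_power2 mult_nonneg_nonneg)
    show "cmod (k z) \<le> M + \<eta>"
    proof (cases "Re z = c")
      case True
      have "z = Complex c (Im z)" using True by (simp add: complex_eq_iff)
      hence "cmod (h z) \<le> M" using bd by metis
      hence "cmod (h z) / (cmod (1 + of_real e * (z - of_real c)))^2 \<le> M"
      proof -
        have "cmod (h z) / (cmod (1 + of_real e * (z - of_real c)))^2 \<le> cmod (h z) / 1"
          by (rule divide_left_mono) (use dpos in auto)
        thus ?thesis using \<open>cmod (h z) \<le> M\<close> by simp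
      qed
      thus ?thesis using nk eta by simp
    next
      case False
      have "z \<notin> interior S" using zf by (simp add: frontier_def)
      moreover have "cmod (z - of_real c) < R \<Longrightarrow> z \<in> interior S"
      proof -
        assume "cmod (z - of_real c) < R"
        hence "z \<in> {z. c < Re z} \<inter> ball (of_real c) R"
          using zc False by (auto simp: dist_norm norm_minus_commute)
        moreover have "{z. c < Re z} \<inter> ball (of_real c) R \<subseteq> S" unfolding S_def by auto
        moreover have "open ({z. c < Re z} \<inter> ball (of_real c) R)"
          by (intro open_Int open_halfspace_Re_gt open_ball)
        ultimately show ?thesis by (meson interior_maximal subsetD)
      qed
      ultimately have zR2: "cmod (z - of_real c) = R" using zR by linarith
      have "cmod z \<le> c + R"
        using norm_triangle_ineq[of "z - of_real c" "of_real c"] zR2 c by simp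
      hence "cmod (h z) \<le> A + B * (c + R)" using gr[OF zc] B
        by (smt (verit) mult_left_mono)
      also have "\<dots> \<le> (A + B * c + B) * R"
      proof -
        have 1: "A * 1 \<le> A * R" by (rule mult_left_mono) (use R1 A in auto)
        have 2: "(B * c) * 1 \<le> (B * c) * R" by (rule mult_left_mono) (use R1 B c in auto)
        show ?thesis using 1 2 by (simp add: algebra_simps)
      qed
      finally have hz: "cmod (h z) \<le> (A + B * c + B) * R" .
      have den: "e^2 * R^2 \<le> (cmod (1 + of_real e * (z - of_real c)))^2"
        using db zR2 by simp
      have eR: "0 < e^2 * R^2" using e R1 by simp
      have "cmod (k z) \<le> (A + B * c + B) * R / (e^2 * R^2)"
        unfolding nk by (rule frac_le) (use hz den eR R1 A B c in \<open>auto intro!: mult_nonneg_nonneg add_nonneg_nonneg\<close>)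
      also have "\<dots> = (A + B * c + B) / (e^2 * R)" using R1 by (simp add: power2_eq_square)
      also have "\<dots> \<le> M + \<eta>"
      proof -
        have "0 < e^2 * (M + \<eta>)" using e M eta by simp
        hence "A + B * c + B \<le> R * (e^2 * (M + \<eta>))" using R3 by (simp add: divide_le_eq)
        thus ?thesis using e R1 by (simp add: divide_le_eq algebra_simps)
      qed
      finally show ?thesis .
    qed
  qed
  moreover have "cmod (k z0) = cmod (h z0) / (cmod (1 + of_real e * (z0 - of_real c)))^2"
    by (simp add: k_def norm_divide norm_power)
  moreover have "0 < (cmod (1 + of_real e * (z0 - of_real c)))^2" using dnz[OF z0] by simp
  ultimately show ?thesis by (simp add: divide_le_eq)
qed

lemma PL:
  assumes hol: "h holomorphic_on C_plus" and c: "0 < c"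
    and gr: "\<And>z. c \<le> Re z \<Longrightarrow> cmod (h z) \<le> A + B * cmod z"
    and A: "0 \<le> A" and B: "0 \<le> B"
    and bd: "\<And>y. cmod (h (Complex c y)) \<le> M"
    and z0: "c \<le> Re z0"
  shows "cmod (h z0) \<le> M"
proof -
  define u where "u = z0 - of_real c"
  have "((\<lambda>e. (M + e) * (cmod (1 + of_real e * u))^2) \<longlongrightarrow> (M + 0) * (cmod (1 + of_real 0 * u))^2) (at_right 0)"
    by (intro tendsto_intros)
  hence lim: "((\<lambda>e. (M + e) * (cmod (1 + of_real e * u))^2) \<longlongrightarrow> M) (at_right 0)" by simp
  have ev: "eventually (\<lambda>e. cmod (h z0) \<le> (M + e) * (cmod (1 + of_real e * u))^2) (at_right 0)"
    unfolding u_def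
    by (rule eventually_at_rightI[of 0 1]) (auto intro!: PL_step[OF hol c gr A B bd z0])
  show ?thesis
    by (rule tendsto_lowerbound[OF lim ev]) simp
qed

lemma Re_near: "cmod (u - v) \<le> r \<Longrightarrow> Re u - r \<le> Re v"
  using abs_Re_le_cmod[of "u - v"] by simp

lemma cauchy_C:
  assumes hol: "F holomorphic_on C_plus" and r: "0 < r" "r < Re u"
    and K: "\<And>v. cmod (u - v) = r \<Longrightarrow> cmod (F v) \<le> K"
  shows "cmod ((deriv ^^ n) F u) \<le> fact n * K / r ^ n"
proof (rule Cauchy_inequality)
  have sub: "cball u r \<subseteq> C_plus"
  proof
    fix v assume "v \<in> cball u r"
    hence "cmod (u - v) \<le> r" by (simp add: dist_norm)
    thus "v \<in> C_plus" using Re_near[of u v r] r by simp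
  qed
  show "F holomorphic_on ball u r" using hol sub ball_subset_cball holomorphic_on_subset by blast
  show "continuous_on (cball u r) F" using holomorphic_on_imp_continuous_on[OF hol] sub
    continuous_on_subset by blast
qed (use r K in auto)

lemma deriv1_bound:
  assumes hol: "F holomorphic_on C_plus" and r: "0 < r" "r < Re u"
    and K: "\<And>v. cmod (u - v) = r \<Longrightarrow> cmod (F v) \<le> K"
  shows "cmod (deriv F u) \<le> K / r"
  using cauchy_C[OF hol r K, of 1] by simp

lemma deriv2_bound:
  assumes hol: "F holomorphic_on C_plus" and r: "0 < r" "r < Re u"
    and K: "\<And>v. cmod (u - v) = r \<Longrightarrow> cmod (F v) \<le> K"
  shows "cmod (deriv (deriv F) u) \<le> 2 * K / r^2"
  using cauchy_C[OF hol r K, of 2] by (simp add: numeral_2_eq_2)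

lemma B_space_hol: "f \<in> B_space \<Longrightarrow> f holomorphic_on C_plus"
  by (simp add: B_space_def)

lemma B_space_fin: "f \<in> B_space \<Longrightarrow> B0_norm f < \<infinity>"
  by (simp add: B_space_def)

lemma vert_bound:
  assumes hol: "f holomorphic_on C_plus" and c: "0 < c"
    and M: "\<And>y. cmod (deriv f (Complex c y)) \<le> M"
  shows "cmod (f (Complex c y1) - f (Complex c y2)) \<le> M * \<bar>y1 - y2\<bar>"
proof -
  define S where "S = {z. Re z = c}"
  have cv: "convex S" unfolding S_def convex_def by (auto simp flip: distrib_right)
  have "cmod (f (Complex c y1) - f (Complex c y2)) \<le> M * cmod (Complex c y1 - Complex c y2)"
  proof (rule field_differentiable_bound[OF cv])
    fix z assume "z \<in> S"
    hence "Re z > 0" using c by (simp add: S_def)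
    thus "(f has_field_derivative deriv f z) (at z within S)"
      using hol_deriv_at[OF hol] has_field_derivative_at_within by blast
    have "z = Complex c (Im z)" using \<open>z \<in> S\<close> by (simp add: S_def complex_eq_iff)
    thus "cmod (deriv f z) \<le> M" using M by metis
  qed (auto simp: S_def)
  also have "cmod (Complex c y1 - Complex c y2) = \<bar>y1 - y2\<bar>"
    by (simp add: cmod_def)
  finally show ?thesis .
qed

lemma G_fin_exists:
  assumes "f \<in> B_space" "0 < x1"
  shows "\<exists>c. 0 < c \<and> c < x1 \<and> G f c < \<infinity>"
proof (rule ccontr)
  assume neg: "\<not> ?thesis"
  have inf: "G f c = \<infinity>" if "0 < c" "c < x1" for c
  proof -
    have "\<not> G f c < \<infinity>" using neg that by blast
    thus ?thesis by (simp add: less_top[symmetric])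
  qed
  have "(\<integral>\<^sup>+ x. \<infinity> * indicator {0<..<x1} x \<partial>lborel) \<le> (\<integral>\<^sup>+ x \<in> {0<..}. G f x \<partial>lborel)"
    by (intro nn_integral_mono) (auto simp: indicator_def inf)
  moreover have "(\<integral>\<^sup>+ x. \<infinity> * indicator {0<..<x1} x \<partial>lborel) = \<infinity>"
    using assms(2) by (simp add: nn_integral_cmult_indicator ennreal_mult_top)
  ultimately have "B0_norm f = \<infinity>" by (simp add: B0_norm_G top_unique)
  thus False using B_space_fin[OF assms(1)] by simp
qed

lemma MONO:
  assumes fB: "f \<in> B_space" and x1: "0 < x1" and z: "x1 \<le> Re z"
  shows "ennreal (cmod (deriv f z)) \<le> G f x1"
proof (cases "G f x1 = \<infinity>")
  case True thus ?thesis by simp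
next
  case False
  have hol: "f holomorphic_on C_plus" using fB by (rule B_space_hol)
  define M where "M = enn2real (G f x1)"
  have GM: "G f x1 = ennreal M" using False by (simp add: M_def ennreal_enn2real_if)
  have M0: "0 \<le> M" by (simp add: M_def)
  have Mb: "cmod (deriv f (Complex x1 y)) \<le> M" for y
  proof -
    have "ennreal (cmod (deriv f (Complex x1 y))) \<le> ennreal M" using G_bound[of "Complex x1 y" x1 f] GM by simp
    thus ?thesis using M0 by simp
  qed
  obtain c where c: "0 < c" "c < x1" "G f c < \<infinity>" using G_fin_exists[OF fB x1] by blast
  define Mc where "Mc = enn2real (G f c)"
  have GMc: "G f c = ennreal Mc" using c(3) by (simp add: Mc_def ennreal_enn2real_if)
  have Mc0: "0 \<le> Mc" by (simp add: Mc_def)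
  have Mcb: "cmod (deriv f (Complex c y)) \<le> Mc" for y
  proof -
    have "ennreal (cmod (deriv f (Complex c y))) \<le> ennreal Mc" using G_bound[of "Complex c y" c f] GMc by simp
    thus ?thesis using Mc0 by simp
  qed
  define B0 where "B0 = enn2real (B0_norm f)"
  have B0e: "B0_norm f = ennreal B0" using B_space_fin[OF fB] by (simp add: B0_def ennreal_enn2real_if)
  have B00: "0 \<le> B0" by (simp add: B0_def)
  define F0 where "F0 = cmod (f (Complex c 0))"
  have growf: "cmod (f w) \<le> F0 + Mc * cmod w + B0" if "c \<le> Re w" for w
  proof -
    have "ennreal (cmod (f (Complex (Re w) (Im w)) - f (Complex c (Im w)))) \<le> (\<integral>\<^sup>+ t\<in>{c..Re w}. G f t \<partial>lborel)"
      by (rule HSEG[OF hol c(1) that])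
    also have "\<dots> \<le> B0_norm f" unfolding B0_norm_G
      by (intro nn_integral_mono) (use c in \<open>auto simp: indicator_def\<close>)
    finally have 1: "cmod (f w - f (Complex c (Im w))) \<le> B0" using B0e B00 by simp
    have 2: "cmod (f (Complex c (Im w)) - f (Complex c 0)) \<le> Mc * \<bar>Im w - 0\<bar>"
      by (rule vert_bound[OF hol c(1) Mcb])
    have 3: "Mc * \<bar>Im w\<bar> \<le> Mc * cmod w" using Mc0 abs_Im_le_cmod mult_left_mono by blast
    have "cmod (f w) \<le> cmod (f w - f (Complex c (Im w))) + cmod (f (Complex c (Im w)) - f (Complex c 0)) + F0"
      unfolding F0_def by (smt (verit) norm_triangle_ineq4 norm_diff_triangle_ineq norm_triangle_sub)
    thus ?thesis using 1 2 3 by simp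
  qed
  define r where "r = x1 - c"
  have r: "0 < r" using c by (simp add: r_def)
  have growd: "cmod (deriv f w) \<le> (F0 + Mc * r + B0) / r + (Mc / r) * cmod w" if "x1 \<le> Re w" for w
  proof -
    have "cmod (deriv f w) \<le> (F0 + Mc * (cmod w + r) + B0) / r"
    proof (rule deriv1_bound[OF hol r])
      show "r < Re w" using that c by (simp add: r_def)
      fix v assume v: "cmod (w - v) = r"
      have "c \<le> Re v" using Re_near[of w v r] v that by (simp add: r_def)
      hence "cmod (f v) \<le> F0 + Mc * cmod v + B0" by (rule growf)
      moreover have "cmod v \<le> cmod w + r" using v norm_triangle_ineq4[of w "w - v"]
        by (smt (verit) norm_minus_commute norm_triangle_sub)
      ultimately show "cmod (f v) \<le> F0 + Mc * (cmod w + r) + B0"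
        using Mc0 by (smt (verit) mult_left_mono)
    qed
    thus ?thesis using r by (simp add: add_divide_distrib algebra_simps)
  qed
  have "cmod (deriv f z) \<le> M"
  proof (rule PL[OF deriv_hol[OF hol] x1 growd _ _ Mb z])
    show "0 \<le> (F0 + Mc * r + B0) / r" using r Mc0 B00 by (simp add: F0_def)
    show "0 \<le> Mc / r" using r Mc0 by simp
  qed
  thus ?thesis by (metis GM ennreal_leI)
qed

lemma cont_deriv_line:
  assumes hol: "f holomorphic_on C_plus" and x: "0 < x"
  shows "continuous_on UNIV (\<lambda>y. deriv f (Complex x y))"
proof -
  have "continuous_on C_plus (deriv f)"
    using deriv_hol[OF hol] holomorphic_on_imp_continuous_on by blast
  moreover have e: "(\<lambda>y. Complex x y) = (\<lambda>y. of_real x + \<i> * of_real y)"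
    by (auto simp: complex_eq_iff)
  have "continuous_on UNIV (\<lambda>y. Complex x y)" unfolding e by (intro continuous_intros)
  moreover have "(\<lambda>y. Complex x y) ` UNIV \<subseteq> C_plus" using x by auto
  ultimately show ?thesis using continuous_on_compose2 by blast
qed

lemma G_Rats:
  assumes hol: "f holomorphic_on C_plus" and x: "0 < x"
  shows "G f x = (SUP q\<in>\<rat>. ennreal (cmod (deriv f (Complex x q))))"
proof (rule antisym)
  define S where "S = (SUP q\<in>\<rat>. ennreal (cmod (deriv f (Complex x q))))"
  have cl: "closed {y. ennreal (cmod (deriv f (Complex x y))) \<le> S}"
    by (intro closed_Collect_le continuous_on_ennreal continuous_on_norm cont_deriv_line[OF hol x]
        continuous_on_const)
  have "\<rat> \<subseteq> {y. ennreal (cmod (deriv f (Complex x y))) \<le> S}"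
    unfolding S_def by (auto intro: SUP_upper)
  hence "closure \<rat> \<subseteq> {y. ennreal (cmod (deriv f (Complex x y))) \<le> S}"
    using cl closure_minimal by blast
  hence "\<And>y. ennreal (cmod (deriv f (Complex x y))) \<le> S" using Rats_closure_real by auto
  thus "G f x \<le> S" unfolding G_def by (intro SUP_least) auto
  show "S \<le> G f x" unfolding S_def G_def by (rule SUP_subset_mono) auto
qed

lemma MEAS:
  assumes hol: "f holomorphic_on C_plus"
  shows "(\<lambda>x. G f x * indicator {0<..} x) \<in> borel_measurable borel"
proof -
  have eq: "(\<lambda>x. G f x * indicator {0<..} x) =
     (\<lambda>x. SUP q\<in>\<rat>. ennreal (indicator {0<..} x *\<^sub>R cmod (deriv f (Complex x q))))"
  proof
    fix x :: real
    show "G f x * indicator {0<..} x = (SUP q\<in>\<rat>. ennreal (indicator {0<..} x *\<^sub>R cmod (deriv f (Complex x q))))"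
    proof (cases "0 < x")
      case True thus ?thesis using G_Rats[OF hol True] by simp
    next
      case False
      have "\<rat> \<noteq> {}" using Rats_0 by blast
      thus ?thesis using False by (simp add: SUP_constant bot_ennreal)
    qed
  qed
  have m: "(\<lambda>x. indicator {0<..} x *\<^sub>R cmod (deriv f (Complex x q))) \<in> borel_measurable borel" for q
  proof (rule borel_measurable_continuous_on_indicator)
    show "{0::real<..} \<in> sets borel" by simp
    have "continuous_on {0<..} (\<lambda>x. deriv f (Complex x q))"
    proof -
      have "continuous_on C_plus (deriv f)"
        using deriv_hol[OF hol] holomorphic_on_imp_continuous_on by blast
      moreover have "continuous_on {0<..} (\<lambda>x. Complex x q)" by (rule cont_Complex)
      moreover have "(\<lambda>x. Complex x q) ` {0<..} \<subseteq> C_plus" by auto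
      ultimately show ?thesis using continuous_on_compose2 by blast
    qed
    thus "continuous_on {0<..} (\<lambda>x. cmod (deriv f (Complex x q)))" by (intro continuous_intros)
  qed
  show ?thesis unfolding eq
    by (intro borel_measurable_SUP countable_rat) (use m in measurable)
qed

lemma MEAS_l:
  assumes hol: "f holomorphic_on C_plus"
  shows "(\<lambda>x. G f x * indicator {0<..} x) \<in> borel_measurable lborel"
  using MEAS[OF hol] by simp

lemma G_mono:
  assumes "f \<in> B_space" "0 < x" "x \<le> x'"
  shows "G f x' \<le> G f x"
  unfolding G_def[of f x'] by (rule SUP_least) (use assms in \<open>auto intro: MONO\<close>)

definition phi :: "(complex \<Rightarrow> complex) \<Rightarrow> real \<Rightarrow> ennreal" where
  "phi f e = (\<integral>\<^sup>+ x. G f x * indicator {0<..} x * indicator {..e} x \<partial>lborel)"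

lemma phi_le_B0: "phi f e \<le> B0_norm f"
  unfolding phi_def B0_norm_G
  by (intro nn_integral_mono) (auto simp: indicator_def)

lemma phi_mono: "e \<le> e' \<Longrightarrow> phi f e \<le> phi f e'"
  unfolding phi_def
  by (intro nn_integral_mono) (auto simp: indicator_def)

lemma phi_ge: assumes "f \<in> B_space" "0 < s" shows "G f s * ennreal s \<le> phi f s"
proof -
  have "G f s * ennreal s = (\<integral>\<^sup>+ x. G f s * indicator {0<..s} x \<partial>lborel)"
    using assms(2) by (simp add: nn_integral_cmult_indicator)
  also have "\<dots> \<le> phi f s" unfolding phi_def
    by (intro nn_integral_mono) (auto simp: indicator_def intro: G_mono[OF assms(1)])
  finally show ?thesis .
qed

lemma phi_lim:
  assumes fB: "f \<in> B_space"
  shows "(phi f \<longlongrightarrow> 0) (at_right 0)"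
proof -
  have hol: "f holomorphic_on C_plus" using fB by (rule B_space_hol)
  define F where "F n x = G f x * indicator {0<..} x * indicator {..1 / real (Suc n)} x" for n x
  have meas: "F n \<in> borel_measurable lborel" for n
    unfolding F_def using MEAS_l[OF hol] by measurable
  have dec: "AE x in lborel. F (Suc i) x \<le> F i x" for i
  proof -
    have le: "1 / real (Suc (Suc i)) \<le> 1 / real (Suc i)" by (rule divide_left_mono) auto
    show ?thesis by (rule AE_I2) (use le in \<open>auto simp: F_def indicator_def\<close>)
  qed
  have fin: "(\<integral>\<^sup>+ x. F 0 x \<partial>lborel) < \<infinity>"
    using phi_le_B0[of f 1] B_space_fin[OF fB] by (simp add: F_def phi_def)
  have inf0: "(INF i. F i x) = 0" for x
  proof (cases "0 < x")
    case True
    obtain n where n: "1 / real (Suc n) < x" using True nat_approx_posE by blast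
    have "(INF i. F i x) \<le> F n x" by (rule INF_lower) simp
    also have "F n x = 0" using n by (simp add: F_def indicator_def)
    finally show ?thesis by simp
  next
    case False
    have "(INF i. F i x) \<le> F 0 x" by (rule INF_lower) simp
    also have "F 0 x = 0" using False by (simp add: F_def indicator_def)
    finally show ?thesis by simp
  qed
  have "(INF i. integral\<^sup>N lborel (F i)) = (\<integral>\<^sup>+ x. (INF i. F i x) \<partial>lborel)"
    by (rule nn_integral_monotone_convergence_INF_AE'[symmetric]) (use dec meas fin in auto)
  also have "\<dots> = 0" by (simp add: inf0)
  finally have I0: "(INF i. integral\<^sup>N lborel (F i)) = 0" .
  have eqi: "integral\<^sup>N lborel (F i) = phi f (1 / real (Suc i))" for i
    unfolding F_def phi_def by (rule refl)
  have INF0: "(INF i. phi f (1 / real (Suc i))) = 0"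
    using I0 unfolding eqi .
  show ?thesis
  proof (rule order_tendstoI)
    fix a :: ennreal assume "a < 0" thus "eventually (\<lambda>x. a < phi f x) (at_right 0)" by simp
  next
    fix a :: ennreal assume a: "0 < a"
    have "(INF i. phi f (1 / real (Suc i))) < a" using INF0 a by simp
    then obtain n where n: "phi f (1 / real (Suc n)) < a"
      unfolding INF_less_iff by blast
    show "eventually (\<lambda>x. phi f x < a) (at_right 0)"
    proof (rule eventually_at_rightI[of 0 "1 / real (Suc n)"])
      fix e assume "e \<in> {0<..<1 / real (Suc n)}"
      hence "phi f e \<le> phi f (1 / real (Suc n))" by (intro phi_mono) auto
      thus "phi f e < a" using n by simp
    qed simp
  qed
qed

lemma shift_deriv_at:
  assumes "F holomorphic_on C_plus" "0 < Re (z + a)"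
  shows "((\<lambda>z. F (z + a)) has_field_derivative deriv F (z + a)) (at z)"
proof -
  have d: "((\<lambda>z. z + a) has_field_derivative 1) (at z)"
    by (auto intro!: derivative_eq_intros)
  show ?thesis
    using DERIV_chain2[of F "deriv F (z + a)" "\<lambda>z. z + a" z 1 UNIV, OF _ d] hol_deriv_at[OF assms]
    by simp
qed

lemma d2_G:
  assumes fB: "f \<in> B_space" and x: "0 < x" and r: "0 < r" and u: "x + r \<le> Re u"
  shows "ennreal (cmod (deriv (deriv f) u)) \<le> ennreal (1 / r) * G f x"
proof (cases "G f x = \<infinity>")
  case True thus ?thesis using r by (simp add: ennreal_mult_top)
next
  case False
  define K where "K = enn2real (G f x)"
  have GK: "G f x = ennreal K" using False by (simp add: K_def ennreal_enn2real_if)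
  have K0: "0 \<le> K" by (simp add: K_def)
  have "cmod (deriv (deriv f) u) \<le> K / r"
  proof (rule deriv1_bound[OF deriv_hol[OF B_space_hol[OF fB]] r])
    show "r < Re u" using x u by simp
    fix v assume "cmod (u - v) = r"
    hence "x \<le> Re v" using Re_near[of u v r] u by simp
    hence "ennreal (cmod (deriv f v)) \<le> G f x" by (rule MONO[OF fB x])
    thus "cmod (deriv f v) \<le> K" using GK K0 by (simp add: ennreal_le_iff)
  qed
  hence "ennreal (cmod (deriv (deriv f) u)) \<le> ennreal (K / r)" by (rule ennreal_leI)
  also have "ennreal (K / r) = ennreal (1 / r) * G f x" using GK K0 r
    by (simp add: ennreal_mult'[symmetric])
  finally show ?thesis .
qed

lemma d3_G:
  assumes fB: "f \<in> B_space" and x: "0 < x" and r: "0 < r" and u: "x + r \<le> Re u"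
  shows "ennreal (cmod (deriv (deriv (deriv f)) u)) \<le> ennreal (2 / r^2) * G f x"
proof (cases "G f x = \<infinity>")
  case True thus ?thesis using r by (simp add: ennreal_mult_top)
next
  case False
  define K where "K = enn2real (G f x)"
  have GK: "G f x = ennreal K" using False by (simp add: K_def ennreal_enn2real_if)
  have K0: "0 \<le> K" by (simp add: K_def)
  have "cmod (deriv (deriv (deriv f)) u) \<le> 2 * K / r^2"
  proof (rule deriv2_bound[OF deriv_hol[OF B_space_hol[OF fB]] r])
    show "r < Re u" using x u by simp
    fix v assume "cmod (u - v) = r"
    hence "x \<le> Re v" using Re_near[of u v r] u by simp
    hence "ennreal (cmod (deriv f v)) \<le> G f x" by (rule MONO[OF fB x])
    thus "cmod (deriv f v) \<le> K" using GK K0 by (simp add: ennreal_le_iff)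
  qed
  hence "ennreal (cmod (deriv (deriv (deriv f)) u)) \<le> ennreal (2 * K / r^2)" by (rule ennreal_leI)
  also have "ennreal (2 * K / r^2) = ennreal (2 / r^2) * G f x" using GK K0 r
    by (simp add: ennreal_mult'[symmetric])
  finally show ?thesis .
qed

lemma QUOT:
  assumes hol: "F holomorphic_on C_plus" and ball: "ball w \<rho> \<subseteq> C_plus"
    and K: "\<And>u. u \<in> ball w \<rho> \<Longrightarrow> cmod (deriv (deriv F) u) \<le> K"
    and h: "0 < cmod h" "cmod h < \<rho>"
  shows "cmod ((F (w + h) - F w) / h - deriv F w) \<le> K * cmod h"
proof -
  have "0 < \<rho>" using h by linarith
  hence wb: "w \<in> ball w \<rho>" by simp
  have hd: "deriv F holomorphic_on C_plus" by (rule deriv_hol[OF hol])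
  have step1: "cmod (deriv F u - deriv F w) \<le> K * cmod (u - w)" if "u \<in> ball w \<rho>" for u
  proof (rule field_differentiable_bound[OF convex_ball])
    fix z assume "z \<in> ball w \<rho>"
    hence "Re z > 0" using ball by auto
    thus "(deriv F has_field_derivative deriv (deriv F) z) (at z within ball w \<rho>)"
      using hol_deriv_at[OF hd] has_field_derivative_at_within by blast
    show "cmod (deriv (deriv F) z) \<le> K" using K \<open>z \<in> ball w \<rho>\<close> by blast
  qed (use that wb in auto)
  define S where "S = closed_segment w (w + h)"
  have Ssub: "S \<subseteq> ball w \<rho>"
  proof
    fix u assume "u \<in> S"
    hence "dist u w \<le> dist w (w + h)" unfolding S_def using dist_in_closed_segment by blast
    thus "u \<in> ball w \<rho>" using h by (simp add: dist_norm norm_minus_commute)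
  qed
  have "cmod ((F (w + h) - (w + h) * deriv F w) - (F w - w * deriv F w)) \<le> (K * cmod h) * cmod ((w + h) - w)"
  proof (rule field_differentiable_bound[OF convex_closed_segment[of w "w + h"]])
    fix z assume zS: "z \<in> closed_segment w (w + h)"
    hence zb: "z \<in> ball w \<rho>" using Ssub S_def by blast
    hence "Re z > 0" using ball by auto
    hence "(F has_field_derivative deriv F z) (at z)" by (rule hol_deriv_at[OF hol])
    hence "((\<lambda>z. F z - z * deriv F w) has_field_derivative (deriv F z - deriv F w)) (at z)"
      by (auto intro!: derivative_eq_intros)
    thus "((\<lambda>z. F z - z * deriv F w) has_field_derivative (deriv F z - deriv F w)) (at z within closed_segment w (w + h))"
      using has_field_derivative_at_within by blast
    have "cmod (z - w) \<le> cmod h" using zS dist_in_closed_segment[OF zS]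
      by (simp add: dist_norm norm_minus_commute)
    moreover have "0 \<le> K" using K[OF wb] norm_ge_zero order_trans by blast
    ultimately show "cmod (deriv F z - deriv F w) \<le> K * cmod h"
      using step1[OF zb] by (smt (verit) mult_left_mono)
  qed auto
  hence "cmod (F (w + h) - F w - h * deriv F w) \<le> K * cmod h * cmod h"
    by (simp add: algebra_simps)
  moreover have "(F (w + h) - F w) / h - deriv F w = (F (w + h) - F w - h * deriv F w) / h"
    using h by (simp add: field_simps)
  ultimately show ?thesis using h by (simp add: norm_divide divide_le_eq)
qed

lemma shift_hol:
  assumes "F holomorphic_on C_plus" "0 \<le> Re a"
  shows "(\<lambda>z. F (z + a)) holomorphic_on C_plus"
proof -
  have "(F \<circ> (\<lambda>z. z + a)) holomorphic_on C_plus"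
    by (rule holomorphic_on_compose_gen[of _ _ _ C_plus]) (use assms in \<open>auto intro!: holomorphic_intros\<close>)
  thus ?thesis by (simp add: o_def)
qed

lemma le_add_self_enn: "(x::ennreal) \<le> x + y" by simp
lemma le_add_self_enn2: "(y::ennreal) \<le> x + y" by simp

lemma B_norm_sup_le: "z \<in> C_plus \<Longrightarrow> ennreal (cmod (f z)) \<le> B_norm f"
  unfolding B_norm_def by (rule order_trans[OF SUP_upper le_add_self_enn])

lemma B_norm_B0_le: "B0_norm f \<le> B_norm f"
  unfolding B_norm_def by (rule le_add_self_enn2)

lemma B0_shift:
  assumes fB: "f \<in> B_space" and a: "0 < Re a"
  shows "B0_norm (T_B a f) \<le> B0_norm f"
  unfolding B0_norm_G
proof (intro nn_integral_mono)
  fix x :: real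
  show "G (T_B a f) x * indicator {0<..} x \<le> G f x * indicator {0<..} x"
  proof (cases "0 < x")
    case True
    have "G (T_B a f) x \<le> G f x" unfolding G_def[of "T_B a f"]
    proof (rule SUP_least)
      fix y
      have "deriv (T_B a f) (Complex x y) = deriv f (Complex x y + a)"
        unfolding T_B_def by (rule deriv_shift[OF B_space_hol[OF fB]]) (use a True in simp)
      moreover have "ennreal (cmod (deriv f (Complex x y + a))) \<le> G f x"
        by (rule MONO[OF fB True]) (use a in simp)
      ultimately show "ennreal (cmod (deriv (T_B a f) (Complex x y))) \<le> G f x" by simp
    qed
    thus ?thesis by (simp add: indicator_def)
  qed simp
qed

lemma sup_shift:
  assumes a: "0 < Re a"
  shows "(SUP z\<in>C_plus. ennreal (cmod (T_B a f z))) \<le> (SUP z\<in>C_plus. ennreal (cmod (f z)))"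
proof (rule SUP_least)
  fix z assume "z \<in> C_plus"
  hence "z + a \<in> C_plus" using a by simp
  thus "ennreal (cmod (T_B a f z)) \<le> (SUP z\<in>C_plus. ennreal (cmod (f z)))"
    unfolding T_B_def by (rule SUP_upper)
qed

lemma B_norm_shift:
  assumes fB: "f \<in> B_space" and a: "0 < Re a"
  shows "B_norm (T_B a f) \<le> B_norm f"
  unfolding B_norm_def by (intro add_mono sup_shift B0_shift fB a)

lemma T_B_in:
  assumes fB: "f \<in> B_space" and a: "0 < Re a"
  shows "T_B a f \<in> B_space"
proof -
  have "T_B a f holomorphic_on C_plus"
    unfolding T_B_def by (rule shift_hol[OF B_space_hol[OF fB]]) (use a in simp)
  moreover have "B0_norm (T_B a f) < \<infinity>"
    using B0_shift[OF fB a] B_space_fin[OF fB] by (rule le_less_trans)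
  ultimately show ?thesis by (simp add: B_space_def)
qed

lemma D_in:
  assumes fB: "f \<in> B_space" and a0: "0 < Re a0"
  shows "(\<lambda>z. deriv f (z + a0)) \<in> B_space"
proof -
  have hol: "f holomorphic_on C_plus" using fB by (rule B_space_hol)
  define \<delta> where "\<delta> = Re a0"
  have d: "0 < \<delta>" using a0 by (simp add: \<delta>_def)
  have "(\<lambda>z. deriv f (z + a0)) holomorphic_on C_plus"
    by (rule shift_hol[OF deriv_hol[OF hol]]) (use a0 in simp)
  moreover have "B0_norm (\<lambda>z. deriv f (z + a0)) < \<infinity>"
  proof -
    have "B0_norm (\<lambda>z. deriv f (z + a0)) \<le> (\<integral>\<^sup>+ x. ennreal (2 / \<delta>) * (G f x * indicator {0<..} x) \<partial>lborel)"
      unfolding B0_norm_G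
    proof (intro nn_integral_mono)
      fix x :: real
      show "G (\<lambda>z. deriv f (z + a0)) x * indicator {0<..} x \<le> ennreal (2 / \<delta>) * (G f x * indicator {0<..} x)"
      proof (cases "0 < x")
        case True
        have "G (\<lambda>z. deriv f (z + a0)) x \<le> ennreal (2 / \<delta>) * G f x" unfolding G_def[of "\<lambda>z. deriv f (z + a0)"]
        proof (rule SUP_least)
          fix y
          have "deriv (\<lambda>z. deriv f (z + a0)) (Complex x y) = deriv (deriv f) (Complex x y + a0)"
            by (rule deriv_shift[OF deriv_hol[OF hol]]) (use a0 True in simp)
          moreover have "ennreal (cmod (deriv (deriv f) (Complex x y + a0))) \<le> ennreal (1 / (\<delta>/2)) * G f x"
            by (rule d2_G[OF fB True]) (use d in \<open>auto simp: \<delta>_def\<close>)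
          ultimately show "ennreal (cmod (deriv (\<lambda>z. deriv f (z + a0)) (Complex x y))) \<le> ennreal (2 / \<delta>) * G f x"
            by simp
        qed
        thus ?thesis using True by simp
      qed simp
    qed
    also have "\<dots> = ennreal (2 / \<delta>) * B0_norm f"
      unfolding B0_norm_G by (rule nn_integral_cmult[OF MEAS_l[OF hol]])
    also have "\<dots> < \<infinity>" using B_space_fin[OF fB] by (simp add: ennreal_mult_less_top)
    finally show ?thesis .
  qed
  ultimately show ?thesis by (simp add: B_space_def)
qed

lemma Q_deriv:
  assumes hol: "f holomorphic_on C_plus" and z: "0 < Re z" and a: "0 < Re a" and a0: "0 < Re a0"
  shows "deriv (\<lambda>z. (f (z + a) - f (z + a0)) / (a - a0) - deriv f (z + a0)) z =
    (deriv f (z + a) - deriv f (z + a0)) / (a - a0) - deriv (deriv f) (z + a0)"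
proof -
  have d1: "((\<lambda>z. f (z + a)) has_field_derivative deriv f (z + a)) (at z)"
    by (rule shift_deriv_at[OF hol]) (use z a in simp)
  have d2: "((\<lambda>z. f (z + a0)) has_field_derivative deriv f (z + a0)) (at z)"
    by (rule shift_deriv_at[OF hol]) (use z a0 in simp)
  have d3: "((\<lambda>z. deriv f (z + a0)) has_field_derivative deriv (deriv f) (z + a0)) (at z)"
    by (rule shift_deriv_at[OF deriv_hol[OF hol]]) (use z a0 in simp)
  show ?thesis
    by (rule DERIV_imp_deriv[OF DERIV_diff[OF DERIV_cdivide[OF DERIV_diff[OF d1 d2]] d3]])
qed

lemma opnorm_bound:
  assumes a0: "0 < Re a0" and a: "0 < Re a" and h: "0 < cmod (a - a0)" "cmod (a - a0) < Re a0 / 4"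
  shows "B_opnorm (\<lambda>f z. (T_B a f z - T_B a0 f z) / (a - a0) - deriv f (z + a0))
          \<le> ennreal (64 * cmod (a - a0) / (Re a0)^2)"
  unfolding B_opnorm_def
proof (rule SUP_least)
  define \<delta> where "\<delta> = Re a0"
  have d: "0 < \<delta>" using a0 by (simp add: \<delta>_def)
  define C where "C = 32 * cmod (a - a0) / \<delta>^2"
  have C0: "0 \<le> C" by (simp add: C_def)
  fix f assume "f \<in> {f \<in> B_space. B_norm f \<le> 1}"
  hence fB: "f \<in> B_space" and n1: "B_norm f \<le> 1" by auto
  have hol: "f holomorphic_on C_plus" using fB by (rule B_space_hol)
  have f1: "cmod (f z) \<le> 1" if "0 < Re z" for z
    using order_trans[OF B_norm_sup_le[of z f] n1] that by simp
  have B01: "B0_norm f \<le> 1" using B_norm_B0_le n1 order_trans by blast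
  define Q where "Q z = (f (z + a) - f (z + a0)) / (a - a0) - deriv f (z + a0)" for z
  have Qeq: "(\<lambda>z. (T_B a f z - T_B a0 f z) / (a - a0) - deriv f (z + a0)) = Q"
    by (auto simp: Q_def T_B_def)
  have ballsub: "ball w (\<delta>/4) \<subseteq> C_plus" if "\<delta> < Re w" for w
  proof
    fix u assume "u \<in> ball w (\<delta>/4)"
    hence "cmod (w - u) \<le> \<delta>/4" by (simp add: dist_norm)
    thus "u \<in> C_plus" using Re_near[of w u "\<delta>/4"] that d by simp
  qed
  have sup_part: "(SUP z\<in>C_plus. ennreal (cmod (Q z))) \<le> ennreal C"
  proof (rule SUP_least)
    fix z assume "z \<in> C_plus"
    hence z: "0 < Re z" by simp
    define w where "w = z + a0"
    have w: "\<delta> < Re w" using z by (simp add: w_def \<delta>_def)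
    have "cmod ((f (w + (a - a0)) - f w) / (a - a0) - deriv f w) \<le> (32 / \<delta>^2) * cmod (a - a0)"
    proof (rule QUOT[OF hol ballsub[OF w]])
      fix u assume u: "u \<in> ball w (\<delta>/4)"
      hence uw: "cmod (w - u) \<le> \<delta>/4" by (simp add: dist_norm)
      have "cmod (deriv (deriv f) u) \<le> 2 * 1 / (\<delta>/4)^2"
      proof (rule deriv2_bound[OF hol])
        show "0 < \<delta>/4" using d by simp
        show "\<delta>/4 < Re u" using Re_near[OF uw] w d by simp
        fix v assume "cmod (u - v) = \<delta>/4"
        hence "0 < Re v" using Re_near[of u v "\<delta>/4"] Re_near[OF uw] w d by simp
        thus "cmod (f v) \<le> 1" by (rule f1)
      qed
      thus "cmod (deriv (deriv f) u) \<le> 32 / \<delta>^2" by (simp add: power2_eq_square)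
    qed (use h in \<open>auto simp: \<delta>_def\<close>)
    moreover have "w + (a - a0) = z + a" by (simp add: w_def)
    ultimately have "cmod (Q z) \<le> C" by (simp add: Q_def C_def w_def mult.commute)
    thus "ennreal (cmod (Q z)) \<le> ennreal C" by (rule ennreal_leI)
  qed
  have B0_part: "B0_norm Q \<le> ennreal C"
  proof -
    have "B0_norm Q \<le> (\<integral>\<^sup>+ x. ennreal C * (G f x * indicator {0<..} x) \<partial>lborel)"
      unfolding B0_norm_G
    proof (intro nn_integral_mono)
      fix x :: real
      show "G Q x * indicator {0<..} x \<le> ennreal C * (G f x * indicator {0<..} x)"
      proof (cases "0 < x")
        case x: True
        have "G Q x \<le> ennreal C * G f x"
        proof (cases "G f x = \<infinity>")
          case True
          have "0 < C" using h d by (simp add: C_def)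
          thus ?thesis using True by (simp add: ennreal_mult_top)
        next
          case False
          define Kx where "Kx = enn2real (G f x)"
          have GK: "G f x = ennreal Kx" using False by (simp add: Kx_def ennreal_enn2real_if)
          have K0: "0 \<le> Kx" by (simp add: Kx_def)
          show ?thesis unfolding G_def[of Q]
          proof (rule SUP_least)
            fix y
            define z where "z = Complex x y"
            define w where "w = z + a0"
            have z: "0 < Re z" using x by (simp add: z_def)
            have w: "\<delta> < Re w" using z by (simp add: w_def \<delta>_def)
            have dQ: "deriv Q z = (deriv f (w + (a - a0)) - deriv f w) / (a - a0) - deriv (deriv f) w"
              unfolding Q_def[abs_def] w_def using Q_deriv[OF hol z a a0] by simp
            have "cmod ((deriv f (w + (a - a0)) - deriv f w) / (a - a0) - deriv (deriv f) w) \<le> (32 * Kx / \<delta>^2) * cmod (a - a0)"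
            proof (rule QUOT[OF deriv_hol[OF hol] ballsub[OF w]])
              fix u assume u: "u \<in> ball w (\<delta>/4)"
              hence uw: "cmod (w - u) \<le> \<delta>/4" by (simp add: dist_norm)
              have "ennreal (cmod (deriv (deriv (deriv f)) u)) \<le> ennreal (2 / (\<delta>/4)^2) * G f x"
                by (rule d3_G[OF fB x]) (use Re_near[OF uw] w d z in \<open>auto simp: w_def z_def \<delta>_def\<close>)
              also have "\<dots> = ennreal (2 / (\<delta>/4)^2 * Kx)" using GK K0 d ennreal_mult[of "2 / (\<delta>/4)^2" Kx] by simp
              finally have "cmod (deriv (deriv (deriv f)) u) \<le> 2 / (\<delta>/4)^2 * Kx"
                using K0 d by (simp add: ennreal_le_iff)
              thus "cmod (deriv (deriv (deriv f)) u) \<le> 32 * Kx / \<delta>^2" by (simp add: power2_eq_square)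
            qed (use h in \<open>auto simp: \<delta>_def\<close>)
            hence "cmod (deriv Q z) \<le> (32 * Kx / \<delta>^2) * cmod (a - a0)" by (simp only: dQ)
            also have "\<dots> = C * Kx" by (simp add: C_def)
            finally have "cmod (deriv Q z) \<le> C * Kx" .
            hence "ennreal (cmod (deriv Q z)) \<le> ennreal (C * Kx)" by (rule ennreal_leI)
            also have "\<dots> = ennreal C * G f x" using GK C0 K0 by (simp add: ennreal_mult)
            finally show "ennreal (cmod (deriv Q (Complex x y))) \<le> ennreal C * G f x" by (simp add: z_def)
          qed
        qed
        thus ?thesis using x by simp
      qed simp
    qed
    also have "\<dots> = ennreal C * B0_norm f"
      unfolding B0_norm_G by (rule nn_integral_cmult[OF MEAS_l[OF hol]])
    also have "\<dots> \<le> ennreal C * 1" by (rule mult_left_mono[OF B01]) simp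
    finally show ?thesis by simp
  qed
  have "B_norm Q \<le> ennreal C + ennreal C"
    unfolding B_norm_def by (rule add_mono[OF sup_part B0_part])
  also have "\<dots> = ennreal (64 * cmod (a - a0) / (Re a0)^2)"
    using C0 by (simp add: ennreal_plus[symmetric] C_def \<delta>_def del: ennreal_plus)
  finally show "B_norm (\<lambda>z. (T_B a f z - T_B a0 f z) / (a - a0) - deriv f (z + a0)) \<le> ennreal (64 * cmod (a - a0) / (Re a0)^2)"
    unfolding Qeq .
qed

lemma hol_part:
  assumes a0: "0 < Re a0"
  shows "((\<lambda>a. B_opnorm (\<lambda>f z. (T_B a f z - T_B a0 f z) / (a - a0) - deriv f (z + a0))) \<longlongrightarrow> 0) (at a0 within C_plus)"
proof (rule tendsto_sandwich[of "\<lambda>_. 0" _ _ "\<lambda>a. ennreal (64 * cmod (a - a0) / (Re a0)^2)"])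
  show "eventually (\<lambda>a. 0 \<le> B_opnorm (\<lambda>f z. (T_B a f z - T_B a0 f z) / (a - a0) - deriv f (z + a0))) (at a0 within C_plus)"
    by simp
  show "eventually (\<lambda>a. B_opnorm (\<lambda>f z. (T_B a f z - T_B a0 f z) / (a - a0) - deriv f (z + a0)) \<le> ennreal (64 * cmod (a - a0) / (Re a0)^2)) (at a0 within C_plus)"
    unfolding eventually_at
  proof (intro exI conjI ballI impI)
    show "0 < Re a0 / 4" using a0 by simp
    fix a assume "a \<in> C_plus" "a \<noteq> a0 \<and> dist a a0 < Re a0 / 4"
    thus "B_opnorm (\<lambda>f z. (T_B a f z - T_B a0 f z) / (a - a0) - deriv f (z + a0)) \<le> ennreal (64 * cmod (a - a0) / (Re a0)^2)"
      by (intro opnorm_bound a0) (auto simp: dist_norm)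
  qed
  show "((\<lambda>_. 0::ennreal) \<longlongrightarrow> 0) (at a0 within C_plus)" by simp
  have "((\<lambda>a. 64 * cmod (a - a0) / (Re a0)^2) \<longlongrightarrow> 64 * cmod (a0 - a0) / (Re a0)^2) (at a0 within C_plus)"
    using a0 by (intro tendsto_intros) auto
  hence "((\<lambda>a. ennreal (64 * cmod (a - a0) / (Re a0)^2)) \<longlongrightarrow> ennreal (64 * cmod (a0 - a0) / (Re a0)^2)) (at a0 within C_plus)"
    by (rule tendsto_ennrealI)
  thus "((\<lambda>a. ennreal (64 * cmod (a - a0) / (Re a0)^2)) \<longlongrightarrow> 0) (at a0 within C_plus)" by simp
qed

lemma sector_prop:
  assumes a: "a \<in> sector \<psi>" and p: "0 < \<psi>" "\<psi> < pi / 2"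
  shows "a \<noteq> 0" "cmod a * cos \<psi> \<le> Re a" "0 < Re a"
proof -
  show a0: "a \<noteq> 0" using a by (simp add: sector_def)
  have arg: "\<bar>Arg a\<bar> < \<psi>" using a by (simp add: sector_def)
  have "cos \<psi> \<le> cos \<bar>Arg a\<bar>"
    by (rule cos_monotone_0_pi_le) (use arg p in auto)
  also have "cos \<bar>Arg a\<bar> = Re a / cmod a" using a0 by (simp add: cos_Arg)
  finally have "cos \<psi> \<le> Re a / cmod a" .
  thus c: "cmod a * cos \<psi> \<le> Re a" using a0 by (simp add: le_divide_eq mult.commute)
  have "0 < cos \<psi>" by (rule cos_gt_zero_pi) (use p in auto)
  moreover have "0 < cmod a" using a0 by simp
  ultimately show "0 < Re a" using c by (smt (verit) mult_pos_pos)
qed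

lemma enn_tri: "ennreal (cmod (u - w)) \<le> ennreal (cmod (u - v)) + ennreal (cmod (v - w))"
proof -
  have "cmod (u - w) \<le> cmod (u - v) + cmod (v - w)" using norm_triangle_ineq[of "u - v" "v - w"] by simp
  hence "ennreal (cmod (u - w)) \<le> ennreal (cmod (u - v) + cmod (v - w))" by (rule ennreal_leI)
  thus ?thesis by (simp add: ennreal_plus)
qed

lemma sup_cont_bound:
  assumes fB: "f \<in> B_space" and a: "a \<in> sector \<psi>" and p: "0 < \<psi>" "\<psi> < pi / 2"
    and z: "0 < Re z"
  shows "ennreal (cmod (f (z + a) - f z)) \<le> ennreal (1 / cos \<psi>) * phi f (2 * cmod a) + phi f (2 * cmod a)"
proof -
  have hol: "f holomorphic_on C_plus" using fB by (rule B_space_hol)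
  note sp = sector_prop[OF a p]
  define s where "s = Re a"
  define x where "x = Re z"
  have s: "0 < s" using sp by (simp add: s_def)
  have x: "0 < x" using z by (simp add: x_def)
  have cp: "0 < cos \<psi>" by (rule cos_gt_zero_pi) (use p in auto)
  have sa: "s \<le> cmod a" unfolding s_def by (rule complex_Re_le_cmod)
  have as: "cmod a \<le> (1 / cos \<psi>) * s" using sp(2) cp by (simp add: s_def le_divide_eq)
  have part1: "ennreal (cmod (f (z + a) - f (z + of_real s))) \<le> ennreal (cmod a) * G f s"
  proof (cases "G f s = \<infinity>")
    case True thus ?thesis using sp(1) by (simp add: ennreal_mult_top)
  next
    case False
    define M where "M = enn2real (G f s)"
    have GM: "G f s = ennreal M" using False by (simp add: M_def ennreal_enn2real_if)
    have M0: "0 \<le> M" by (simp add: M_def)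
    have Mb: "cmod (deriv f (Complex (x + s) y)) \<le> M" for y
    proof -
      have "ennreal (cmod (deriv f (Complex (x + s) y))) \<le> G f s" by (rule MONO[OF fB s]) (use x in simp)
      thus ?thesis using GM M0 by simp
    qed
    have "cmod (f (Complex (x + s) (Im z + Im a)) - f (Complex (x + s) (Im z))) \<le> M * \<bar>(Im z + Im a) - Im z\<bar>"
      by (rule vert_bound[OF hol _ Mb]) (use x s in simp)
    moreover have "Complex (x + s) (Im z + Im a) = z + a" by (simp add: complex_eq_iff x_def s_def)
    moreover have "Complex (x + s) (Im z) = z + of_real s" by (simp add: complex_eq_iff x_def s_def)
    ultimately have "cmod (f (z + a) - f (z + of_real s)) \<le> M * \<bar>Im a\<bar>" by simp
    also have "\<dots> \<le> M * cmod a" using M0 abs_Im_le_cmod mult_left_mono by blast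
    finally have "ennreal (cmod (f (z + a) - f (z + of_real s))) \<le> ennreal (M * cmod a)" by (rule ennreal_leI)
    thus ?thesis using GM M0 by (simp add: ennreal_mult mult.commute)
  qed
  also have "ennreal (cmod a) * G f s \<le> ennreal ((1 / cos \<psi>) * s) * G f s"
    by (rule mult_right_mono) (use as in \<open>auto intro!: ennreal_leI\<close>)
  also have "\<dots> = ennreal (1 / cos \<psi>) * (G f s * ennreal s)"
    by (subst ennreal_mult) (use cp s in \<open>auto simp: mult_ac\<close>)
  also have "\<dots> \<le> ennreal (1 / cos \<psi>) * phi f (2 * cmod a)"
  proof (rule mult_left_mono)
    have "G f s * ennreal s \<le> phi f s" by (rule phi_ge[OF fB s])
    also have "\<dots> \<le> phi f (2 * cmod a)" by (rule phi_mono) (use sa s in simp)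
    finally show "G f s * ennreal s \<le> phi f (2 * cmod a)" .
  qed simp
  finally have p1: "ennreal (cmod (f (z + a) - f (z + of_real s))) \<le> ennreal (1 / cos \<psi>) * phi f (2 * cmod a)" .
  have "ennreal (cmod (f (Complex (x + s) (Im z)) - f (Complex x (Im z)))) \<le> (\<integral>\<^sup>+ t\<in>{x..x+s}. G f t \<partial>lborel)"
    by (rule HSEG[OF hol x]) (use s in simp)
  also have "\<dots> \<le> phi f (2 * cmod a)"
  proof (cases "s \<le> x")
    case True
    have "(\<integral>\<^sup>+ t\<in>{x..x+s}. G f t \<partial>lborel) \<le> (\<integral>\<^sup>+ t. G f s * indicator {x..x+s} t \<partial>lborel)"
      by (intro nn_integral_mono) (use True s in \<open>auto simp: indicator_def intro!: G_mono[OF fB s]\<close>)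
    also have "\<dots> = G f s * ennreal s" using s by (simp add: nn_integral_cmult_indicator)
    also have "\<dots> \<le> phi f s" by (rule phi_ge[OF fB s])
    also have "\<dots> \<le> phi f (2 * cmod a)" by (rule phi_mono) (use sa s in simp)
    finally show ?thesis .
  next
    case False
    have "(\<integral>\<^sup>+ t\<in>{x..x+s}. G f t \<partial>lborel) \<le> phi f (2 * s)"
      unfolding phi_def by (intro nn_integral_mono) (use False x in \<open>auto simp: indicator_def\<close>)
    also have "\<dots> \<le> phi f (2 * cmod a)" by (rule phi_mono) (use sa in simp)
    finally show ?thesis .
  qed
  finally have p2: "ennreal (cmod (f (z + of_real s) - f z)) \<le> phi f (2 * cmod a)"
  proof -
    assume h: "ennreal (cmod (f (Complex (x + s) (Im z)) - f (Complex x (Im z)))) \<le> phi f (2 * cmod a)"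
    have "Complex (x + s) (Im z) = z + of_real s" "Complex x (Im z) = z" by (simp_all add: complex_eq_iff x_def)
    thus ?thesis using h by simp
  qed
  have "ennreal (cmod (f (z + a) - f z)) \<le> ennreal (cmod (f (z + a) - f (z + of_real s))) + ennreal (cmod (f (z + of_real s) - f z))"
    by (rule enn_tri)
  also have "\<dots> \<le> ennreal (1 / cos \<psi>) * phi f (2 * cmod a) + phi f (2 * cmod a)"
    by (rule add_mono[OF p1 p2])
  finally show ?thesis .
qed

lemma Delta_deriv:
  assumes hol: "f holomorphic_on C_plus" and w: "0 < Re w" and a: "0 < Re a"
  shows "deriv (\<lambda>z. T_B a f z - f z) w = deriv f (w + a) - deriv f w"
proof -
  have d1: "((\<lambda>z. f (z + a)) has_field_derivative deriv f (w + a)) (at w)"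
    by (rule shift_deriv_at[OF hol]) (use w a in simp)
  have d2: "(f has_field_derivative deriv f w) (at w)" by (rule hol_deriv_at[OF hol w])
  show ?thesis unfolding T_B_def by (rule DERIV_imp_deriv[OF DERIV_diff[OF d1 d2]])
qed

lemma far_bound:
  assumes fB: "f \<in> B_space" and a: "0 < Re a" and eta: "0 < \<eta>" and x: "\<eta> < x"
  shows "ennreal (cmod (deriv f (Complex x y + a) - deriv f (Complex x y))) \<le> ennreal (2 * cmod a / \<eta>) * G f (x - \<eta>/2)"
proof (cases "G f (x - \<eta>/2) = \<infinity>")
  case True
  have "a \<noteq> 0" using a by auto
  hence "0 < 2 * cmod a / \<eta>" using eta by simp
  thus ?thesis using True eta by (simp add: ennreal_mult_top)
next
  case False
  define K where "K = enn2real (G f (x - \<eta>/2))"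
  have GK: "G f (x - \<eta>/2) = ennreal K" using False by (simp add: K_def ennreal_enn2real_if)
  have K0: "0 \<le> K" by (simp add: K_def)
  have hol: "f holomorphic_on C_plus" using fB by (rule B_space_hol)
  define S where "S = {u. Re u \<ge> x}"
  have "cmod (deriv f (Complex x y + a) - deriv f (Complex x y)) \<le> (2 / \<eta> * K) * cmod ((Complex x y + a) - Complex x y)"
  proof (rule field_differentiable_bound[of S])
    show "convex S" unfolding S_def by (rule convex_halfspace_Re_ge)
    fix u assume "u \<in> S"
    hence u: "x \<le> Re u" by (simp add: S_def)
    hence "0 < Re u" using eta x by simp
    thus "(deriv f has_field_derivative deriv (deriv f) u) (at u within S)"
      using hol_deriv_at[OF deriv_hol[OF hol]] has_field_derivative_at_within by blast
    have "ennreal (cmod (deriv (deriv f) u)) \<le> ennreal (1 / (\<eta>/2)) * G f (x - \<eta>/2)"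
      by (rule d2_G[OF fB]) (use eta x u in auto)
    also have "\<dots> = ennreal (2 / \<eta> * K)" using GK K0 eta ennreal_mult[of "2 / \<eta>" K] by simp
    finally show "cmod (deriv (deriv f) u) \<le> 2 / \<eta> * K" using K0 eta by simp
  qed (use a in \<open>auto simp: S_def\<close>)
  hence "cmod (deriv f (Complex x y + a) - deriv f (Complex x y)) \<le> (2 * cmod a / \<eta>) * K" by (simp add: mult_ac)
  hence "ennreal (cmod (deriv f (Complex x y + a) - deriv f (Complex x y))) \<le> ennreal ((2 * cmod a / \<eta>) * K)"
    by (rule ennreal_leI)
  also have "\<dots> = ennreal (2 * cmod a / \<eta>) * G f (x - \<eta>/2)"
    unfolding GK by (rule ennreal_mult) (use K0 eta in auto)
  finally show ?thesis .
qed

lemma B0_cont_bound: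
  assumes fB: "f \<in> B_space" and a: "a \<in> sector \<psi>" and p: "0 < \<psi>" "\<psi> < pi / 2"
  shows "B0_norm (\<lambda>z. T_B a f z - f z) \<le> 2 * phi f (sqrt (cmod a)) + ennreal (2 * sqrt (cmod a)) * B0_norm f"
proof -
  have hol: "f holomorphic_on C_plus" using fB by (rule B_space_hol)
  note sp = sector_prop[OF a p]
  have ra: "0 < Re a" using sp(3) .
  define \<eta> where "\<eta> = sqrt (cmod a)"
  have eta: "0 < \<eta>" using sp(1) by (simp add: \<eta>_def)
  define H where "H x = G f x * indicator {0<..} x" for x
  have Hm: "H \<in> borel_measurable borel" unfolding H_def[abs_def] using MEAS[OF hol] .
  define c where "c = 2 * cmod a / \<eta>"
  have c: "c = 2 * sqrt (cmod a)" unfolding c_def \<eta>_def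
    using real_div_sqrt[of "cmod a"] by (simp add: times_divide_eq_right[symmetric] del: times_divide_eq_right)
  have pw: "G (\<lambda>z. T_B a f z - f z) x * indicator {0<..} x \<le>
        2 * (G f x * indicator {0<..} x * indicator {..\<eta>} x) + ennreal c * H (- (\<eta>/2) + 1 * x)" for x
  proof (cases "0 < x")
    case x: True
    have dd: "deriv (\<lambda>z. T_B a f z - f z) (Complex x y) = deriv f (Complex x y + a) - deriv f (Complex x y)" for y
      by (rule Delta_deriv[OF hol _ ra]) (use x in simp)
    show ?thesis
    proof (cases "x \<le> \<eta>")
      case True
      have "G (\<lambda>z. T_B a f z - f z) x \<le> 2 * G f x" unfolding G_def[of "\<lambda>z. T_B a f z - f z"]
      proof (rule SUP_least)
        fix y
        have "ennreal (cmod (deriv f (Complex x y + a) - deriv f (Complex x y))) \<le>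
              ennreal (cmod (deriv f (Complex x y + a) - 0)) + ennreal (cmod (0 - deriv f (Complex x y)))"
          by (rule enn_tri)
        also have "\<dots> \<le> G f x + G f x"
          by (intro add_mono) (use x ra in \<open>auto intro!: MONO[OF fB x]\<close>)
        finally show "ennreal (cmod (deriv (\<lambda>z. T_B a f z - f z) (Complex x y))) \<le> 2 * G f x"
          by (simp add: dd mult_2)
      qed
      hence "G (\<lambda>z. T_B a f z - f z) x * indicator {0<..} x \<le> 2 * (G f x * indicator {0<..} x * indicator {..\<eta>} x)"
        using x True by simp
      thus ?thesis by (rule order_trans) simp
    next
      case False
      hence xe: "\<eta> < x" by simp
      have "G (\<lambda>z. T_B a f z - f z) x \<le> ennreal c * G f (x - \<eta>/2)" unfolding G_def[of "\<lambda>z. T_B a f z - f z"]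
      proof (rule SUP_least)
        fix y
        show "ennreal (cmod (deriv (\<lambda>z. T_B a f z - f z) (Complex x y))) \<le> ennreal c * G f (x - \<eta>/2)"
          unfolding dd c_def by (rule far_bound[OF fB ra eta xe])
      qed
      moreover have "H (- (\<eta>/2) + 1 * x) = G f (x - \<eta>/2)" using xe eta by (simp add: H_def)
      ultimately have "G (\<lambda>z. T_B a f z - f z) x * indicator {0<..} x \<le> ennreal c * H (- (\<eta>/2) + 1 * x)"
        using x by simp
      thus ?thesis by (rule order_trans) simp
    qed
  qed simp
  have m0: "(\<lambda>x. G f x * indicator {0<..} x) \<in> borel_measurable lborel" by (rule MEAS_l[OF hol])
  have mi: "(indicator {..\<eta>} :: real \<Rightarrow> ennreal) \<in> borel_measurable lborel"
    by (rule borel_measurable_indicator) simp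
  have m1: "(\<lambda>x. G f x * indicator {0<..} x * indicator {..\<eta>} x) \<in> borel_measurable lborel"
    by (rule borel_measurable_times_ennreal[OF m0 mi])
  have m2: "(\<lambda>x. 2 * (G f x * indicator {0<..} x * indicator {..\<eta>} x)) \<in> borel_measurable lborel"
    by (rule borel_measurable_times_ennreal[OF borel_measurable_const m1])
  have aff: "(\<lambda>x::real. - (\<eta>/2) + 1 * x) \<in> borel_measurable lborel"
    unfolding measurable_lborel2 by (rule borel_measurable_continuous_onI) (intro continuous_intros)
  have Hc: "(\<lambda>x. H (- (\<eta>/2) + 1 * x)) \<in> borel_measurable lborel"
    by (rule measurable_compose[OF aff]) (use Hm in simp)
  have m3: "(\<lambda>x. ennreal c * H (- (\<eta>/2) + 1 * x)) \<in> borel_measurable lborel"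
    by (rule borel_measurable_times_ennreal[OF borel_measurable_const Hc])
  have "B0_norm (\<lambda>z. T_B a f z - f z) \<le>
      (\<integral>\<^sup>+ x. 2 * (G f x * indicator {0<..} x * indicator {..\<eta>} x) + ennreal c * H (- (\<eta>/2) + 1 * x) \<partial>lborel)"
    unfolding B0_norm_G by (rule nn_integral_mono) (rule pw)
  also have "\<dots> = (\<integral>\<^sup>+ x. 2 * (G f x * indicator {0<..} x * indicator {..\<eta>} x) \<partial>lborel) +
       (\<integral>\<^sup>+ x. ennreal c * H (- (\<eta>/2) + 1 * x) \<partial>lborel)"
    by (rule nn_integral_add[OF m2 m3])
  also have "(\<integral>\<^sup>+ x. 2 * (G f x * indicator {0<..} x * indicator {..\<eta>} x) \<partial>lborel) = 2 * phi f \<eta>"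
    unfolding phi_def by (rule nn_integral_cmult[OF m1])
  also have "(\<integral>\<^sup>+ x. ennreal c * H (- (\<eta>/2) + 1 * x) \<partial>lborel) = ennreal c * (\<integral>\<^sup>+ x. H (- (\<eta>/2) + 1 * x) \<partial>lborel)"
    by (rule nn_integral_cmult[OF Hc])
  also have "(\<integral>\<^sup>+ x. H (- (\<eta>/2) + 1 * x) \<partial>lborel) = B0_norm f"
  proof -
    have "(\<integral>\<^sup>+ x. H x \<partial>lborel) = (\<integral>\<^sup>+ x. H (- (\<eta>/2) + 1 * x) \<partial>lborel)"
      using nn_integral_real_affine[OF Hm, of 1 "- (\<eta>/2)"] by simp
    thus ?thesis by (simp add: B0_norm_G H_def)
  qed
  finally show ?thesis by (simp add: \<eta>_def c)
qed

lemma cont_part: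
  assumes fB: "f \<in> B_space" and p: "0 < \<psi>" "\<psi> < pi / 2"
  shows "((\<lambda>a. B_norm (\<lambda>z. T_B a f z - f z)) \<longlongrightarrow> 0) (at 0 within sector \<psi>)"
proof (rule tendsto_sandwich[of "\<lambda>_. 0" _ _
    "\<lambda>a. (ennreal (1 / cos \<psi>) * phi f (2 * cmod a) + phi f (2 * cmod a)) +
         (2 * phi f (sqrt (cmod a)) + ennreal (2 * sqrt (cmod a)) * B0_norm f)"])
  let ?F = "at (0::complex) within sector \<psi>"
  show "eventually (\<lambda>a. 0 \<le> B_norm (\<lambda>z. T_B a f z - f z)) ?F" by simp
  show "((\<lambda>_. 0::ennreal) \<longlongrightarrow> 0) ?F" by simp
  have ev: "eventually (\<lambda>a. a \<in> sector \<psi>) ?F" unfolding eventually_at_filter by simp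
  show "eventually (\<lambda>a. B_norm (\<lambda>z. T_B a f z - f z) \<le>
     (ennreal (1 / cos \<psi>) * phi f (2 * cmod a) + phi f (2 * cmod a)) +
         (2 * phi f (sqrt (cmod a)) + ennreal (2 * sqrt (cmod a)) * B0_norm f)) ?F"
    using ev
  proof (rule eventually_mono)
    fix a assume a: "a \<in> sector \<psi>"
    have "(SUP z\<in>C_plus. ennreal (cmod (T_B a f z - f z))) \<le> ennreal (1 / cos \<psi>) * phi f (2 * cmod a) + phi f (2 * cmod a)"
    proof (rule SUP_least)
      fix z assume "z \<in> C_plus"
      thus "ennreal (cmod (T_B a f z - f z)) \<le> ennreal (1 / cos \<psi>) * phi f (2 * cmod a) + phi f (2 * cmod a)"
        unfolding T_B_def using sup_cont_bound[OF fB a p] by simp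
    qed
    thus "B_norm (\<lambda>z. T_B a f z - f z) \<le>
     (ennreal (1 / cos \<psi>) * phi f (2 * cmod a) + phi f (2 * cmod a)) +
         (2 * phi f (sqrt (cmod a)) + ennreal (2 * sqrt (cmod a)) * B0_norm f)"
      unfolding B_norm_def by (rule add_mono[OF _ B0_cont_bound[OF fB a p]])
  qed
  have nz: "eventually (\<lambda>a. a \<noteq> 0) ?F" unfolding eventually_at_filter by simp
  have t1: "((\<lambda>a. 2 * cmod a) \<longlongrightarrow> 0) ?F"
  proof -
    have "((\<lambda>a. 2 * cmod a) \<longlongrightarrow> 2 * cmod (0::complex)) ?F" by (intro tendsto_intros)
    thus ?thesis by simp
  qed
  have t2: "((\<lambda>a. sqrt (cmod a)) \<longlongrightarrow> 0) ?F"
  proof -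
    have "((\<lambda>a. sqrt (cmod a)) \<longlongrightarrow> sqrt (cmod (0::complex))) ?F" by (intro tendsto_intros)
    thus ?thesis by simp
  qed
  have L1: "filterlim (\<lambda>a. 2 * cmod a) (at_right 0) ?F"
    by (rule tendsto_imp_filterlim_at_right[OF t1]) (use nz in \<open>auto elim: eventually_mono\<close>)
  have L2: "filterlim (\<lambda>a. sqrt (cmod a)) (at_right 0) ?F"
    by (rule tendsto_imp_filterlim_at_right[OF t2]) (use nz in \<open>auto elim: eventually_mono\<close>)
  have P1: "((\<lambda>a. phi f (2 * cmod a)) \<longlongrightarrow> 0) ?F"
    using filterlim_compose[OF phi_lim[OF fB] L1] .
  have P2: "((\<lambda>a. phi f (sqrt (cmod a))) \<longlongrightarrow> 0) ?F"
    using filterlim_compose[OF phi_lim[OF fB] L2] .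
  have P3: "((\<lambda>a. ennreal (2 * sqrt (cmod a))) \<longlongrightarrow> 0) ?F"
  proof -
    have "((\<lambda>a. 2 * sqrt (cmod a)) \<longlongrightarrow> 2 * 0) ?F" by (intro tendsto_intros t2)
    hence "((\<lambda>a. ennreal (2 * sqrt (cmod a))) \<longlongrightarrow> ennreal (2 * 0)) ?F" by (rule tendsto_ennrealI)
    thus ?thesis by simp
  qed
  have B0fin: "B0_norm f \<noteq> \<infinity>" using B_space_fin[OF fB] by simp
  have Q1: "((\<lambda>a. ennreal (1 / cos \<psi>) * phi f (2 * cmod a)) \<longlongrightarrow> ennreal (1 / cos \<psi>) * 0) ?F"
    by (rule ennreal_tendsto_cmult[OF _ P1]) simp
  have Q2: "((\<lambda>a. 2 * phi f (sqrt (cmod a))) \<longlongrightarrow> 2 * 0) ?F"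
    by (rule ennreal_tendsto_cmult[OF _ P2]) simp
  have Q3: "((\<lambda>a. ennreal (2 * sqrt (cmod a)) * B0_norm f) \<longlongrightarrow> 0 * B0_norm f) ?F"
    by (rule tendsto_mult_ennreal[OF P3 tendsto_const]) (use B0fin in simp)
  have "((\<lambda>a. (ennreal (1 / cos \<psi>) * phi f (2 * cmod a) + phi f (2 * cmod a)) +
         (2 * phi f (sqrt (cmod a)) + ennreal (2 * sqrt (cmod a)) * B0_norm f)) \<longlongrightarrow>
         (ennreal (1 / cos \<psi>) * 0 + 0) + (2 * 0 + 0 * B0_norm f)) ?F"
    by (intro tendsto_add Q1 Q2 Q3 P1)
  thus "((\<lambda>a. (ennreal (1 / cos \<psi>) * phi f (2 * cmod a) + phi f (2 * cmod a)) +
         (2 * phi f (sqrt (cmod a)) + ennreal (2 * sqrt (cmod a)) * B0_norm f)) \<longlongrightarrow> 0) ?F"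
    by simp
qed

theorem proposition4p6:
  shows "hol_C0_contraction_semigroup_B T_B"
  unfolding hol_C0_contraction_semigroup_B_def
proof (intro conjI ballI allI impI)
  fix a f assume "a \<in> C_plus" "f \<in> B_space"
  thus "T_B a f \<in> B_space" by (intro T_B_in) auto
next
  fix a f g c z assume "a \<in> C_plus" "f \<in> B_space" "g \<in> B_space" "z \<in> C_plus"
  show "T_B a (\<lambda>w. c * f w + g w) z = c * T_B a f z + T_B a g z" by (simp add: T_B_def)
next
  fix a f g z assume "a \<in> C_plus" "f \<in> B_space" "g \<in> B_space" "\<forall>z\<in>C_plus. f z = g z" "z \<in> C_plus"
  thus "T_B a f z = T_B a g z" by (simp add: T_B_def)
next
  fix a b f z assume "a \<in> C_plus" "b \<in> C_plus" "f \<in> B_space" "z \<in> C_plus"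
  show "T_B (a + b) f z = T_B a (T_B b f) z" by (simp add: T_B_def add.assoc)
next
  fix a f assume "a \<in> C_plus" "f \<in> B_space"
  thus "B_norm (T_B a f) \<le> B_norm f" by (intro B_norm_shift) auto
next
  fix a0 assume a0: "a0 \<in> C_plus"
  show "\<exists>D. (\<forall>f\<in>B_space. D f \<in> B_space) \<and>
      ((\<lambda>a. B_opnorm (\<lambda>f z. (T_B a f z - T_B a0 f z) / (a - a0) - D f z)) \<longlongrightarrow> 0) (at a0 within C_plus)"
  proof (intro exI conjI ballI)
    fix f assume "f \<in> B_space"
    thus "(\<lambda>z. deriv f (z + a0)) \<in> B_space" by (rule D_in) (use a0 in simp)
  next
    show "((\<lambda>a. B_opnorm (\<lambda>f z. (T_B a f z - T_B a0 f z) / (a - a0) - deriv f (z + a0))) \<longlongrightarrow> 0) (at a0 within C_plus)"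
      by (rule hol_part) (use a0 in simp)
  qed
next
  fix \<psi> f assume "0 < \<psi> \<and> \<psi> < pi / 2" "f \<in> B_space"
  thus "((\<lambda>a. B_norm (\<lambda>z. T_B a f z - f z)) \<longlongrightarrow> 0) (at 0 within sector \<psi>)"
    by (intro cont_part) auto
qed

end
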